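(* Let $m\in\mathcal{M}_D$, $\nu\in\mathcal{M}_S(m)$, $\lambda>0$ and $\sigma\ge0$. There exists a positive constant $C_{\lambda,m}$ such that for all $\phi$ on $\mathbb{R}^2$, \[ C_{\lambda,m}^{-1}\|E^\lambda_\nu\phi\|_{\dot H^\sigma\cap L^2}\le\|E^\lambda_\nu\phi\|_{\dot H^\sigma}+\|\phi\|_{L^2}\le C_{\lambda,m}\|E^\lambda_\nu\phi\|_{\dot H^\sigma\cap L^2}, \] \[ C_{\lambda,m}^{-1}\|E^\lambda_\nu\phi\|_{H^\sigma}\le\|E^\lambda_\nu\phi\|_{\dot H^\sigma}+\|\phi\|_{L^2}\le C_{\lambda,m}\|E^\lambda_\nu\phi\|_{H^\sigma}. \]
   Context: $\|f\|_{\dot H^\sigma}=\||\xi|^\sigma\hat f\|_{L^2}$, $\|f\|_{H^\sigma}=\|(1+|\xi|^2)^{\sigma/2}\hat f\|_{L^2}$, $\|f\|_{X\cap Y}=(\|f\|_X^2+\|f\|_Y^2)^{1/2}$. (O1) $w\in C^1([0,\infty))$, $w>0$, $w'\ge0$; (O2) $rw'(r)\le Cw(r)$; (O3) $w(r_1r_2)\le C(w(r_1)+w(r_2))$. $\mathcal{M}_W$: quotients of functions satisfying (O1)–(O3). $\mathcal{M}_D=\{m\ge0:1+m\in\mathcal{M}_W\}$. $\mathcal{M}_S(m)$ is the set of $\nu\in C^1([0,\infty))$ with $\nu,\nu'\ge0$, $\sup_{r\ge0}r\nu'(r)<\infty$, and $\nu(r)\le C(1+m(r))$ for some $C$. $E^\lambda_\nu$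 is the Fourier multiplier with symbol $e^{\lambda\nu(|\xi|)}$. *)

theory Defs
  imports "HOL-Analysis.Analysis"
begin

definition C1_half :: "(real \<Rightarrow> real) \<Rightarrow> (real \<Rightarrow> real) \<Rightarrow> bool" where
  "C1_half w w' \<longleftrightarrow>
     (\<forall>r\<ge>0. (w has_real_derivative w' r) (at r within {0..})) \<and> continuous_on {0..} w'"

definition admissible_weight :: "(real \<Rightarrow> real) \<Rightarrow> bool" where
  "admissible_weight w \<longleftrightarrow>
     (\<exists>w'. C1_half w w' \<and>
        (\<forall>r\<ge>0. w r > 0 \<and> w' r \<ge> 0) \<and>
        (\<exists>C. \<forall>r\<ge>0. r * w' r \<le> C * w r) \<and>
        (\<exists>C. \<forall>r1\<ge>0. \<forall>r2\<ge>0. w (r1 * r2) \<le> C * (w r1 + w r2)))"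

definition M_W :: "(real \<Rightarrow> real) \<Rightarrow> bool" where
  "M_W m \<longleftrightarrow> (\<exists>w1 w2. admissible_weight w1 \<and> admissible_weight w2 \<and>
                        (\<forall>r\<ge>0. m r = w1 r / w2 r))"

definition M_D :: "(real \<Rightarrow> real) \<Rightarrow> bool" where
  "M_D m \<longleftrightarrow> (\<forall>r\<ge>0. m r \<ge> 0) \<and> M_W (\<lambda>r. 1 + m r)"

definition M_S :: "(real \<Rightarrow> real) \<Rightarrow> (real \<Rightarrow> real) \<Rightarrow> bool" where
  "M_S m \<nu> \<longleftrightarrow>
     (\<exists>\<nu>'. C1_half \<nu> \<nu>' \<and> (\<forall>r\<ge>0. \<nu> r \<ge> 0 \<and> \<nu>' r \<ge> 0) \<and>
        (\<exists>B. \<forall>r\<ge>0. r * \<nu>' r \<le> B)) \<and>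
     (\<exists>C. \<forall>r\<ge>0. \<nu> r \<le> C * (1 + m r))"

definition enn_sqrt :: "ennreal \<Rightarrow> ennreal" where
  "enn_sqrt x = (if x = \<infinity> then \<infinity> else ennreal (sqrt (enn2real x)))"

text \<open>All norms are expressed through the Fourier transform \<psi> = \<phi>^ of \<phi> on \<real>^2
  (unitary normalisation, so that the L^2 norm of \<phi> equals that of \<psi>, Plancherel).\<close>
definition L2_hat :: "(real^2 \<Rightarrow> complex) \<Rightarrow> ennreal" where
  "L2_hat \<psi> = enn_sqrt (\<integral>\<^sup>+ \<xi>. ennreal ((cmod (\<psi> \<xi>))\<^sup>2) \<partial>lborel)"

definition Hdot_hat :: "real \<Rightarrow> (real^2 \<Rightarrow> complex) \<Rightarrow> ennreal" where
  "Hdot_hat \<sigma> \<psi> = enn_sqrt (\<integral>\<^sup>+ \<xi>. ennreal ((norm \<xi> powr \<sigma> * cmod (\<psi> \<xi>))\<^sup>2) \<partial>lborel)"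

definition H_hat :: "real \<Rightarrow> (real^2 \<Rightarrow> complex) \<Rightarrow> ennreal" where
  "H_hat \<sigma> \<psi> = enn_sqrt (\<integral>\<^sup>+ \<xi>. ennreal (((1 + (norm \<xi>)\<^sup>2) powr (\<sigma>/2) * cmod (\<psi> \<xi>))\<^sup>2) \<partial>lborel)"

definition Hdot_L2_hat :: "real \<Rightarrow> (real^2 \<Rightarrow> complex) \<Rightarrow> ennreal" where
  "Hdot_L2_hat \<sigma> \<psi> = enn_sqrt ((Hdot_hat \<sigma> \<psi>)\<^sup>2 + (L2_hat \<psi>)\<^sup>2)"

text \<open>Fourier transform of E^\<lambda>_\<nu> \<phi>: multiplication of \<phi>^ by e^{\<lambda>\<nu>(|\<xi>|)}.\<close>
definition E_hat :: "real \<Rightarrow> (real \<Rightarrow> real) \<Rightarrow> (real^2 \<Rightarrow> complex) \<Rightarrow> (real^2 \<Rightarrow> complex)" where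
  "E_hat lam \<nu> \<psi> = (\<lambda>\<xi>. complex_of_real (exp (lam * \<nu> (norm \<xi>))) * \<psi> \<xi>)"

end

theory Submission
  imports Defs
begin


lemma pw1:
  fixes r e \<sigma> :: real assumes "r \<ge> 0" "\<sigma> \<ge> 0"
  shows "e^2 \<le> ((1+r^2) powr (\<sigma>/2) * e)^2" "(r powr \<sigma> * e)^2 \<le> ((1+r^2) powr (\<sigma>/2) * e)^2"
proof -
  have a: "1 \<le> (1+r^2) powr (\<sigma>/2)" using assms by (intro ge_one_powr_ge_zero) auto
  have "e^2 = (1 * e)^2" by simp
  also have "\<dots> \<le> ((1+r^2) powr (\<sigma>/2) * e)^2" unfolding power_mult_distrib
    by (rule mult_right_mono[OF power_mono[OF a]]) auto
  finally show "e^2 \<le> ((1+r^2) powr (\<sigma>/2) * e)^2" .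
  have "r powr \<sigma> = (r^2) powr (\<sigma>/2)"
  proof (cases "r = 0")
    case False
    then have "r^2 = r powr 2" using assms by (simp add: powr_realpow)
    then show ?thesis by (simp add: powr_powr)
  qed simp
  also have "\<dots> \<le> (1+r^2) powr (\<sigma>/2)" using assms by (intro powr_mono2) auto
  finally have b: "r powr \<sigma> \<le> (1+r^2) powr (\<sigma>/2)" .
  have "(r powr \<sigma>)^2 \<le> ((1+r^2) powr (\<sigma>/2))^2"
    by (rule power_mono[OF b]) simp
  then show "(r powr \<sigma> * e)^2 \<le> ((1+r^2) powr (\<sigma>/2) * e)^2" unfolding power_mult_distrib
    by (rule mult_right_mono) simp
qed

lemma pw2:
  fixes r e \<sigma> :: real assumes "r \<ge> 0" "\<sigma> \<ge> 0"
  shows "((1+r^2) powr (\<sigma>/2) * e)^2 \<le> 2 powr \<sigma> * ((r powr \<sigma> * e)^2 + e^2)"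
proof -
  have sq: "((1+r^2) powr (\<sigma>/2))^2 = (1+r^2) powr \<sigma>"
  proof -
    have "((1+r^2) powr (\<sigma>/2))^2 = ((1+r^2) powr (\<sigma>/2)) powr 2"
      by (subst powr_numeral) (auto simp: add_pos_nonneg)
    then show ?thesis by (simp add: powr_powr)
  qed
  have sq2: "(r powr \<sigma>)^2 = (r^2) powr \<sigma>" using assms
    by (simp add: power2_eq_square powr_mult)
  have "(1+r^2) powr \<sigma> \<le> 2 powr \<sigma> * ((r powr \<sigma>)^2 + 1)"
  proof (cases "r \<le> 1")
    case True
    have "r^2 \<le> 1" using True assms by (simp add: power_le_one)
    then have "(1+r^2) powr \<sigma> \<le> 2 powr \<sigma>" using assms by (intro powr_mono2) auto
    also have "\<dots> \<le> 2 powr \<sigma> * ((r powr \<sigma>)^2 + 1)" by simp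
    finally show ?thesis .
  next
    case False
    have "1 \<le> r^2" using False by (simp add: one_le_power)
    then have "(1+r^2) powr \<sigma> \<le> (2 * r^2) powr \<sigma>" using assms by (intro powr_mono2) auto
    also have "\<dots> = 2 powr \<sigma> * (r powr \<sigma>)^2" using assms sq2 by (simp add: powr_mult)
    also have "\<dots> \<le> 2 powr \<sigma> * ((r powr \<sigma>)^2 + 1)" by simp
    finally show ?thesis .
  qed
  then have "(1+r^2) powr \<sigma> * e^2 \<le> 2 powr \<sigma> * ((r powr \<sigma>)^2 + 1) * e^2"
    by (rule mult_right_mono) simp
  then show ?thesis unfolding power_mult_distrib sq by (simp add: algebra_simps)
qed

lemma pw3:
  fixes r p \<sigma> x K :: real assumes "r \<ge> 0" "\<sigma> \<ge> 0" "r < 1 \<Longrightarrow> x^2 \<le> K" "K \<ge> 0"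
  shows "(x * p)^2 \<le> K * p^2 + (r powr \<sigma> * (x * p))^2"
proof (cases "r < 1")
  case True
  then have "(x*p)^2 \<le> K * p^2" using assms unfolding power_mult_distrib
    by (intro mult_right_mono) auto
  moreover have "0 \<le> (r powr \<sigma> * (x * p))^2" by simp
  ultimately show ?thesis by linarith
next
  case False
  then have "1 \<le> r powr \<sigma>" using assms by (intro ge_one_powr_ge_zero) auto
  then have "1 \<le> (r powr \<sigma>)^2" by (simp add: one_le_power)
  then have "1 * (x*p)^2 \<le> (r powr \<sigma>)^2 * (x*p)^2" 
    by (rule mult_right_mono) simp
  moreover have "0 \<le> K * p^2" using assms(4) by simp
  ultimately show ?thesis unfolding power_mult_distrib by linarith
qed

lemma reals:
  fixes a b p h K s :: real
  assumes "a \<ge> 0" "p \<ge> 0" "p \<le> b" "b \<le> K * p + a" "a \<le> h" "b \<le> h" "h \<le> s * (a + b)"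
    "K \<ge> 0" "s \<ge> 1"
  defines "C \<equiv> 2 + s * (K + 2)"
  shows "sqrt (a+b) / C \<le> sqrt a + sqrt p" "sqrt a + sqrt p \<le> C * sqrt (a+b)"
        "sqrt h / C \<le> sqrt a + sqrt p" "sqrt a + sqrt p \<le> C * sqrt h"
proof -
  have C1: "C \<ge> 2" "C \<ge> s*(K+2)" "C \<ge> 1" using assms by (auto simp: C_def)
  have sa: "sqrt a \<le> sqrt (a+b)" "sqrt p \<le> sqrt (a+b)" using assms by auto
  have "sqrt a + sqrt p \<le> 2 * sqrt (a+b)" using sa by linarith
  also have "\<dots> \<le> C * sqrt (a+b)" using C1 assms by (intro mult_right_mono) auto
  finally show 2: "sqrt a + sqrt p \<le> C * sqrt (a+b)" .
  have "sqrt a \<le> sqrt h" "sqrt p \<le> sqrt h" using assms by auto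
  then have "sqrt a + sqrt p \<le> 2 * sqrt h" by linarith
  also have "\<dots> \<le> C * sqrt h" using C1 assms by (intro mult_right_mono) auto
  finally show "sqrt a + sqrt p \<le> C * sqrt h" .
  have key: "sqrt (s * (a+b)) \<le> C * (sqrt a + sqrt p)"
  proof -
    have Ka: "K * a \<ge> 0" using assms by simp
    have e: "(K+2)*(a+p) = K*a + K*p + 2*a + 2*p" by (simp add: algebra_simps)
    have ab: "a + b \<le> (K+2)*(a+p)" unfolding e using assms Ka by linarith
    have ap: "a + p \<le> (sqrt a + sqrt p)^2" using assms by (simp add: power2_sum)
    have "s*(a+b) \<le> s*((K+2)*(a+p))" using assms ab by (intro mult_left_mono) auto
    also have "\<dots> \<le> s*((K+2)*(sqrt a + sqrt p)^2)" using assms ap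
      by (intro mult_left_mono) auto
    also have "\<dots> = (s*(K+2)) * (sqrt a + sqrt p)^2" by (simp only: mult.assoc)
    also have "\<dots> \<le> C^2 * (sqrt a + sqrt p)^2"
    proof -
      have "C * 1 \<le> C * C" using C1 by (intro mult_left_mono) auto
      then have "s*(K+2) \<le> C * C" using C1 by linarith
      then show ?thesis by (intro mult_right_mono) (auto simp: power2_eq_square)
    qed
    also have "\<dots> = (C * (sqrt a + sqrt p))^2" by (simp add: power_mult_distrib)
    finally have "sqrt (s*(a+b)) \<le> sqrt ((C * (sqrt a + sqrt p))^2)" by (rule real_sqrt_le_mono)
    also have "\<dots> = C * (sqrt a + sqrt p)" using C1 assms by simp
    finally show ?thesis .
  qed
  have hb: "sqrt h \<le> sqrt (s*(a+b))" using assms by auto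
  have "a + b \<le> s*(a+b)" using assms by (simp add: mult_le_cancel_right1)
  then have ab: "sqrt (a+b) \<le> sqrt (s*(a+b))" by (rule real_sqrt_le_mono)
  have k1: "sqrt (a+b) \<le> C * (sqrt a + sqrt p)" using key ab by linarith
  have k2: "sqrt h \<le> C * (sqrt a + sqrt p)" using key hb by linarith
  have Cp: "C > 0" using C1 by linarith
  show "sqrt (a+b) / C \<le> sqrt a + sqrt p" using k1 Cp
    by (simp add: divide_le_eq mult.commute)
  show "sqrt h / C \<le> sqrt a + sqrt p" using k2 Cp
    by (simp add: divide_le_eq mult.commute)
qed

lemma enn_sqrt_ennreal: "x \<ge> 0 \<Longrightarrow> enn_sqrt (ennreal x) = ennreal (sqrt x)"
  by (simp add: enn_sqrt_def)

lemma enn_sqrt_top: "enn_sqrt top = top"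
  by (simp add: enn_sqrt_def)

lemma enn_sqrt_sq: "(enn_sqrt x)^2 = x"
proof (cases x rule: ennreal_cases)
  case (real r)
  then show ?thesis by (simp add: enn_sqrt_ennreal ennreal_power)
qed (simp add: enn_sqrt_def)


theorem lemma6p3:
  fixes m \<nu> :: "real \<Rightarrow> real" and lam \<sigma> :: real
  assumes "M_D m" and "M_S m \<nu>" and "lam > 0" and "\<sigma> \<ge> 0"
  shows "\<exists>C::real. C > 0 \<and>
    (\<forall>\<psi> :: real^2 \<Rightarrow> complex. \<psi> \<in> borel_measurable lborel \<longrightarrow>
       ennreal (1 / C) * Hdot_L2_hat \<sigma> (E_hat lam \<nu> \<psi>)
         \<le> Hdot_hat \<sigma> (E_hat lam \<nu> \<psi>) + L2_hat \<psi> \<and>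
       Hdot_hat \<sigma> (E_hat lam \<nu> \<psi>) + L2_hat \<psi>
         \<le> ennreal C * Hdot_L2_hat \<sigma> (E_hat lam \<nu> \<psi>) \<and>
       ennreal (1 / C) * H_hat \<sigma> (E_hat lam \<nu> \<psi>)
         \<le> Hdot_hat \<sigma> (E_hat lam \<nu> \<psi>) + L2_hat \<psi> \<and>
       Hdot_hat \<sigma> (E_hat lam \<nu> \<psi>) + L2_hat \<psi>
         \<le> ennreal C * H_hat \<sigma> (E_hat lam \<nu> \<psi>))"
  
proof -
  from assms(2) obtain \<nu>' where d: "C1_half \<nu> \<nu>'" and nn: "\<forall>r\<ge>0. \<nu> r \<ge> 0 \<and> \<nu>' r \<ge> 0"
    unfolding M_S_def by blast
  have cont: "continuous_on {0..} \<nu>"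
    unfolding continuous_on_eq_continuous_within
  proof
    fix r :: real assume "r \<in> {0..}"
    then have "(\<nu> has_real_derivative \<nu>' r) (at r within {0..})" using d unfolding C1_half_def by auto
    then show "continuous (at r within {0..}) \<nu>" by (rule DERIV_continuous)
  qed
  have "continuous_on {0..1} \<nu>" using cont by (rule continuous_on_subset) auto
  then obtain r0 where "r0 \<in> {0..1}" and Mb: "\<forall>y\<in>{0..1}. \<nu> y \<le> \<nu> r0"
    using continuous_attains_sup[of "{0..1::real}" \<nu>] by auto
  define M where "M = \<nu> r0"
  define K where "K = (exp (lam * M))^2"
  define s where "s = (2::real) powr \<sigma>"
  define C where "C = 2 + s * (K + 2)"
  have K0: "K \<ge> 0" unfolding K_def by simp
  have s1: "s \<ge> 1" unfolding s_def using assms(4) by (intro ge_one_powr_ge_zero) auto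
  have Cpos: "C > 0" unfolding C_def using K0 s1 by (simp add: add_pos_nonneg)
  have meas_nu: "(\<lambda>\<xi>::real^2. \<nu> (norm \<xi>)) \<in> borel_measurable lborel"
  proof -
    have c0: "continuous_on UNIV (\<lambda>x::real. max 0 x)"
      by (rule continuous_on_max[OF continuous_on_const continuous_on_id])
    have "continuous_on UNIV (\<lambda>x. \<nu> (max 0 x))"
      by (rule continuous_on_compose2[OF cont c0]) auto
    then have "(\<lambda>\<xi>::real^2. \<nu> (max 0 (norm \<xi>))) \<in> borel_measurable lborel"
      by (rule borel_measurable_continuous_on) measurable
    then show ?thesis by simp
  qed
  show ?thesis
  proof (intro exI[of _ C] conjI allI impI)
    show "C > 0" by (rule Cpos)
    fix \<psi> :: "real^2 \<Rightarrow> complex" assume m\<psi>: "\<psi> \<in> borel_measurable lborel"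
    define x where "x \<xi> = exp (lam * \<nu> (norm \<xi>))" for \<xi> :: "real^2"
    define p where "p \<xi> = cmod (\<psi> \<xi>)" for \<xi> :: "real^2"
    have mx[measurable]: "x \<in> borel_measurable lborel" unfolding x_def using meas_nu by measurable
    have mp[measurable]: "p \<in> borel_measurable lborel" unfolding p_def using m\<psi> by measurable
    have x1: "x \<xi> \<ge> 1" for \<xi> unfolding x_def using nn assms(3) by simp
    have p0: "p \<xi> \<ge> 0" for \<xi> unfolding p_def by simp
    have Eabs: "cmod (E_hat lam \<nu> \<psi> \<xi>) = x \<xi> * p \<xi>" for \<xi>
      by (simp add: E_hat_def x_def p_def norm_mult)
    define A where "A = (\<integral>\<^sup>+\<xi>. ennreal ((norm \<xi> powr \<sigma> * (x \<xi> * p \<xi>))^2) \<partial>lborel)"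
    define B where "B = (\<integral>\<^sup>+\<xi>. ennreal ((x \<xi> * p \<xi>)^2) \<partial>lborel)"
    define P where "P = (\<integral>\<^sup>+\<xi>. ennreal ((p \<xi>)^2) \<partial>lborel)"
    define H where "H = (\<integral>\<^sup>+\<xi>. ennreal (((1 + (norm \<xi>)^2) powr (\<sigma>/2) * (x \<xi> * p \<xi>))^2) \<partial>lborel)"
    have eHd: "Hdot_hat \<sigma> (E_hat lam \<nu> \<psi>) = enn_sqrt A"
      unfolding Hdot_hat_def A_def Eabs ..
    have eL2: "L2_hat \<psi> = enn_sqrt P" unfolding L2_hat_def P_def p_def ..
    have eL2E: "L2_hat (E_hat lam \<nu> \<psi>) = enn_sqrt B" unfolding L2_hat_def B_def Eabs ..
    have eHL: "Hdot_L2_hat \<sigma> (E_hat lam \<nu> \<psi>) = enn_sqrt (A + B)"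
      unfolding Hdot_L2_hat_def eHd eL2E enn_sqrt_sq ..
    have eH: "H_hat \<sigma> (E_hat lam \<nu> \<psi>) = enn_sqrt H" unfolding H_hat_def H_def Eabs ..
    have i1: "P \<le> B" unfolding P_def B_def
    proof (intro nn_integral_mono ennreal_leI)
      fix \<xi> :: "real^2"
      have "p \<xi> \<le> x \<xi> * p \<xi>" using x1[of \<xi>] p0[of \<xi>] mult_right_mono[of 1 "x \<xi>" "p \<xi>"] by simp
      then show "(p \<xi>)^2 \<le> (x \<xi> * p \<xi>)^2" using p0[of \<xi>] by (intro power_mono) auto
    qed
    have i2: "B \<le> ennreal K * P + A"
    proof -
      have "B \<le> (\<integral>\<^sup>+\<xi>. ennreal (K * (p \<xi>)^2) + ennreal ((norm \<xi> powr \<sigma> * (x \<xi> * p \<xi>))^2) \<partial>lborel)"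
        unfolding B_def
      proof (intro nn_integral_mono)
        fix \<xi> :: "real^2"
        have "norm \<xi> < 1 \<Longrightarrow> (x \<xi>)^2 \<le> K"
        proof -
          assume "norm \<xi> < 1"
          then have "\<nu> (norm \<xi>) \<le> M" using Mb unfolding M_def by auto
          then have "x \<xi> \<le> exp (lam * M)" unfolding x_def using assms(3) by simp
          then show "(x \<xi>)^2 \<le> K" unfolding K_def using x1[of \<xi>] by (intro power_mono) auto
        qed
        then have "(x \<xi> * p \<xi>)^2 \<le> K * (p \<xi>)^2 + (norm \<xi> powr \<sigma> * (x \<xi> * p \<xi>))^2"
          using assms(4) K0 by (intro pw3) auto
        then show "ennreal ((x \<xi> * p \<xi>)^2) \<le> ennreal (K * (p \<xi>)^2) + ennreal ((norm \<xi> powr \<sigma> * (x \<xi> * p \<xi>))^2)"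
          using K0 by (simp add: ennreal_plus[symmetric] del: ennreal_plus)
      qed
      also have "\<dots> = (\<integral>\<^sup>+\<xi>. ennreal (K * (p \<xi>)^2) \<partial>lborel) + A"
        unfolding A_def by (rule nn_integral_add) auto
      also have "(\<integral>\<^sup>+\<xi>. ennreal (K * (p \<xi>)^2) \<partial>lborel) = ennreal K * P"
        unfolding P_def using K0 by (simp add: ennreal_mult nn_integral_cmult)
      finally show ?thesis .
    qed
    have i3: "A \<le> H" "B \<le> H" unfolding A_def B_def H_def
      using pw1 assms(4) by (auto intro!: nn_integral_mono ennreal_leI)
    have i4: "H \<le> ennreal s * (A + B)"
    proof -
      have "H \<le> (\<integral>\<^sup>+\<xi>. ennreal s * (ennreal ((norm \<xi> powr \<sigma> * (x \<xi> * p \<xi>))^2) + ennreal ((x \<xi> * p \<xi>)^2)) \<partial>lborel)"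
        unfolding H_def
      proof (intro nn_integral_mono)
        fix \<xi> :: "real^2"
        have "((1 + (norm \<xi>)^2) powr (\<sigma>/2) * (x \<xi> * p \<xi>))^2 \<le> s * ((norm \<xi> powr \<sigma> * (x \<xi> * p \<xi>))^2 + (x \<xi> * p \<xi>)^2)"
          unfolding s_def using assms(4) by (intro pw2) auto
        then show "ennreal (((1 + (norm \<xi>)^2) powr (\<sigma>/2) * (x \<xi> * p \<xi>))^2) \<le> ennreal s * (ennreal ((norm \<xi> powr \<sigma> * (x \<xi> * p \<xi>))^2) + ennreal ((x \<xi> * p \<xi>)^2))"
          using s1 by (simp add: ennreal_plus[symmetric] ennreal_mult[symmetric] del: ennreal_plus)
      qed
      also have "\<dots> = ennreal s * (A + B)"
        unfolding A_def B_def by (simp add: nn_integral_cmult nn_integral_add)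
      finally show ?thesis .
    qed
    have S: "ennreal (1 / C) * enn_sqrt (A + B) \<le> enn_sqrt A + enn_sqrt P \<and>
       enn_sqrt A + enn_sqrt P \<le> ennreal C * enn_sqrt (A + B) \<and>
       ennreal (1 / C) * enn_sqrt H \<le> enn_sqrt A + enn_sqrt P \<and>
       enn_sqrt A + enn_sqrt P \<le> ennreal C * enn_sqrt H"
    proof (cases "A = \<infinity> \<or> P = \<infinity>")
      case True
      have Ct: "ennreal C * \<infinity> = \<infinity>" using Cpos by (simp add: ennreal_mult_top)
      have e: "A + B = \<infinity>" "H = \<infinity>" "enn_sqrt A + enn_sqrt P = \<infinity>"
        using True i1 i3 by (auto simp: enn_sqrt_top top_unique)
      show ?thesis unfolding e enn_sqrt_top using Cpos by (simp add: enn_sqrt_def ennreal_mult_top)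
    next
      case False
      obtain a where a: "A = ennreal a" "a \<ge> 0"
        using False by (cases A rule: ennreal_cases) auto
      obtain p0 where pp: "P = ennreal p0" "p0 \<ge> 0"
        using False by (cases P rule: ennreal_cases) auto
      have eq1: "ennreal K * P + A = ennreal (K * p0 + a)"
        unfolding a(1) pp(1) using K0 a(2) pp(2) by (simp add: ennreal_mult)
      have Bb: "B \<le> ennreal (K * p0 + a)" using i2 unfolding eq1 .
      have "B < top" using le_less_trans[OF Bb ennreal_less_top] .
      then obtain b where b: "B = ennreal b" "b \<ge> 0"
        by (cases B rule: ennreal_cases) auto
      have eq2: "ennreal s * (A + B) = ennreal (s * (a + b))"
        unfolding a(1) b(1) using s1 a(2) b(2) by (simp add: ennreal_mult)
      have Hb: "H \<le> ennreal (s * (a + b))" using i4 unfolding eq2 .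
      have "H < top" using le_less_trans[OF Hb ennreal_less_top] .
      then obtain h where h: "H = ennreal h" "h \<ge> 0"
        by (cases H rule: ennreal_cases) auto
      have r1: "p0 \<le> b" using i1 unfolding pp(1) b(1) using b(2) by (simp add: ennreal_le_iff)
      have "0 \<le> K * p0 + a" using K0 a(2) pp(2) by simp
      then have r2: "b \<le> K * p0 + a" using Bb unfolding b(1)
        by (simp only: ennreal_le_iff)
      have r3: "a \<le> h" "b \<le> h" using i3 unfolding a(1) b(1) h(1) using h(2) by (simp_all add: ennreal_le_iff)
      have "0 \<le> s * (a + b)" using s1 a(2) b(2) by simp
      then have r4: "h \<le> s * (a + b)" using Hb unfolding h(1)
        by (simp only: ennreal_le_iff)
      note R = reals[OF a(2) pp(2) r1 r2 r3 r4 K0 s1, folded C_def]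
      have AB: "A + B = ennreal (a + b)" using a b by simp
      have d1: "ennreal (1 / C) * ennreal y = ennreal (y / C)" if "y \<ge> 0" for y
        using Cpos that by (simp add: ennreal_mult[symmetric])
      have d2: "ennreal C * ennreal y = ennreal (C * y)" if "y \<ge> 0" for y
        using Cpos that by (simp add: ennreal_mult[symmetric])
      have sum: "enn_sqrt A + enn_sqrt P = ennreal (sqrt a + sqrt p0)"
        using a pp by (simp add: enn_sqrt_ennreal)
      show ?thesis unfolding sum AB h(1) using a b h pp R
        by (simp add: enn_sqrt_ennreal d1 d2 ennreal_leI del: ennreal_plus)
    qed
    then show "ennreal (1 / C) * Hdot_L2_hat \<sigma> (E_hat lam \<nu> \<psi>) \<le> Hdot_hat \<sigma> (E_hat lam \<nu> \<psi>) + L2_hat \<psi>"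
      "Hdot_hat \<sigma> (E_hat lam \<nu> \<psi>) + L2_hat \<psi> \<le> ennreal C * Hdot_L2_hat \<sigma> (E_hat lam \<nu> \<psi>)"
      "ennreal (1 / C) * H_hat \<sigma> (E_hat lam \<nu> \<psi>) \<le> Hdot_hat \<sigma> (E_hat lam \<nu> \<psi>) + L2_hat \<psi>"
      "Hdot_hat \<sigma> (E_hat lam \<nu> \<psi>) + L2_hat \<psi> \<le> ennreal C * H_hat \<sigma> (E_hat lam \<nu> \<psi>)"
      unfolding eHd eL2 eHL eH by auto
  qed
qed

end
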